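(* Let $g\ge1$, $n=g+1$, $k\in\{1,\dots,g\}$, $I_k=\{1,\dots,k\}$. Define the rational map $\tilde\psi_{[\mathbf k],v_1}:\mathbb C^{2g+1}\dashrightarrow(\mathbb C^* )^{\binom nk}\times\mathbb{WP}^{3g-1}$, $(\lambda_1,\dots,\lambda_g,\kappa_1,\dots,\kappa_n)\mapsto((\alpha_J)_{J\in\binom{[n]}k},(\mathbf U,\mathbf V,\mathbf W))$ by $$\alpha_J=\frac{\tilde A_JK_J}{\tilde A_{I_k}K_{I_k}}=\frac{K_J^2}{K_{I_k}^2}\prod_{l=1}^g\lambda_l^{(B^T\mathbf c_J)_{l+1}},\qquad[\mathbf U\ \mathbf V\ \mathbf W]=BK.$$ Then the Zariski closure of the image of $\tilde\psi_{[\mathbf k],v_1}$ equals $\mathcal H_{\Gamma,[\mathbf k],v_1}$, the Zariski closure of the image of the map $\psi_{[\mathbf k],v_1}(\beta,\kappa)=((\alpha_I)_I,(\mathbf U,\mathbf V,\mathbf W))$ with $\alpha_I=a_{\mathbf c_I}(\kappa)\prod_l\beta_l^{(\mathbf c_I)_l}$ and $[\mathbf U\ \mathbf V\ \mathbf W]=BK$; i.e. the two parametrizations are equivalent.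
   Context: $B\in\mathbb Z^{g\times n}$ has $B_{i,1}=1$, $B_{i,i+1}=-1$, other entries $0$; $K$ is the $n\times 3$ matrix $K_{ij}=\kappa_i^j$; $\mathbb{WP}^{3g-1}$ has coordinates $(\mathbf U,\mathbf V,\mathbf W)$ of weights $1,2,3$. $\tilde A=V\cdot\mathrm{diag}(1,\lambda_1,\dots,\lambda_g)$ with $V_{ij}=\kappa_j^{i-1}$ ($k\times n$), $\tilde A_J$ its maximal minor on columns $J$, and $K_J=\prod_{i<j\in J}(\kappa_j-\kappa_i)$. Let $\mathbf s\in\mathbb R^n$ have first $k$ entries $1$, rest $0$; for a $k$-subset $I$, $\mathbf c_I\in\mathbb Z^g$ is the unique vector with $B^T\mathbf c_I+\mathbf s=\mathbf 1_I$. For $\mathbf c\in\mathbb Z^g$, $a_{\mathbf c}(\kappa)=\prod_{i}(\kappa_{i+1}-\kappa_1)^{-2c_i^2}\prod_{i<j}\big(\frac{(\kappa_{i+1}-\kappa_{j+1})^2}{(\kappa_{i+1}-\kappa_1)^2(\kappa_{j+1}-\kappa_1)^2}\big)^{c_ic_j}$. $\mathcal H_{\Gamma,[\mathbf k],v_1}$ is the Hirota variety component of the genus-$g$ banana graph parametrizing KP multi-solitons from degenerate hyperelliptic curves. *)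

theory Defs
  imports Complex_Main "HOL-Combinatorics.Permutations"
begin

text \<open>Points of the ambient affine space are functions from a set of coordinate
  names to the complex numbers (coordinates outside C are set to 0).\<close>

inductive poly_fun :: "'i set \<Rightarrow> (('i \<Rightarrow> complex) \<Rightarrow> complex) \<Rightarrow> bool" for C where
  pf_const: "poly_fun C (\<lambda>x. c)"
| pf_var: "i \<in> C \<Longrightarrow> poly_fun C (\<lambda>x. x i)"
| pf_add: "poly_fun C p \<Longrightarrow> poly_fun C q \<Longrightarrow> poly_fun C (\<lambda>x. p x + q x)"
| pf_mult: "poly_fun C p \<Longrightarrow> poly_fun C q \<Longrightarrow> poly_fun C (\<lambda>x. p x * q x)"

definition zariski_closure :: "'i set \<Rightarrow> ('i \<Rightarrow> complex) set \<Rightarrow> ('i \<Rightarrow> complex) set" where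
  "zariski_closure C S =
     {x. (\<forall>i. i \<notin> C \<longrightarrow> x i = 0) \<and>
         (\<forall>p. poly_fun C p \<longrightarrow> (\<forall>y\<in>S. p y = 0) \<longrightarrow> p x = 0)}"

text \<open>Al J is the Pluecker-type coordinate alpha_J; Crd j i is the (i,j) entry of
  the g x 3 matrix [U V W] (j = 1,2,3 for U,V,W, of weight j).\<close>

datatype coord = Al "nat set" | Crd nat nat

definition ksubsets :: "nat \<Rightarrow> nat \<Rightarrow> nat set set" where
  "ksubsets n k = {J. J \<subseteq> {1..n} \<and> card J = k}"

definition coords :: "nat \<Rightarrow> nat \<Rightarrow> coord set" where
  "coords g k = Al ` ksubsets (g+1) k \<union> {Crd j i | j i. j \<in> {1,2,3} \<and> i \<in> {1..g}}"

text \<open>Affine cone over (C^*)^(n choose k) x WP^(3g-1): all alpha_J nonzero and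
  (U,V,W) not identically zero.\<close>
definition target :: "nat \<Rightarrow> nat \<Rightarrow> (coord \<Rightarrow> complex) set" where
  "target g k = {x. (\<forall>J\<in>ksubsets (g+1) k. x (Al J) \<noteq> 0) \<and>
                    (\<exists>j\<in>{1,2,3}. \<exists>i\<in>{1..g}. x (Crd j i) \<noteq> 0)}"

definition Bmat :: "nat \<Rightarrow> nat \<Rightarrow> int" where
  "Bmat i m = (if m = 1 then 1 else if m = i + 1 then -1 else 0)"

definition Kmat :: "(nat \<Rightarrow> complex) \<Rightarrow> nat \<Rightarrow> nat \<Rightarrow> complex" where
  "Kmat kap m j = kap m ^ j"

definition BK :: "nat \<Rightarrow> (nat \<Rightarrow> complex) \<Rightarrow> nat \<Rightarrow> nat \<Rightarrow> complex" where
  "BK g kap i j = (\<Sum>m=1..g+1. of_int (Bmat i m) * Kmat kap m j)"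

definition BTc :: "nat \<Rightarrow> (nat \<Rightarrow> int) \<Rightarrow> nat \<Rightarrow> int" where
  "BTc g c m = (\<Sum>i=1..g. Bmat i m * c i)"

definition svec :: "nat \<Rightarrow> nat \<Rightarrow> int" where
  "svec k m = (if 1 \<le> m \<and> m \<le> k then 1 else 0)"

definition indic :: "nat set \<Rightarrow> nat \<Rightarrow> int" where
  "indic J m = (if m \<in> J then 1 else 0)"

definition cvec :: "nat \<Rightarrow> nat \<Rightarrow> nat set \<Rightarrow> nat \<Rightarrow> int" where
  "cvec g k J = (THE c. (\<forall>m\<in>{1..g+1}. BTc g c m + svec k m = indic J m) \<and>
                        (\<forall>i. i \<notin> {1..g} \<longrightarrow> c i = 0))"

definition KJ :: "(nat \<Rightarrow> complex) \<Rightarrow> nat set \<Rightarrow> complex" where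
  "KJ kap J = (\<Prod>(i,j)\<in>{(i,j). i \<in> J \<and> j \<in> J \<and> i < j}. kap j - kap i)"

text \<open>tilde A = V diag(1, lambda_1, ..., lambda_g), a k x n matrix (1-based).\<close>
definition Atilde :: "(nat \<Rightarrow> complex) \<Rightarrow> (nat \<Rightarrow> complex) \<Rightarrow> nat \<Rightarrow> nat \<Rightarrow> complex" where
  "Atilde lam kap i j = kap j ^ (i - 1) * (if j = 1 then 1 else lam (j - 1))"

definition minor :: "nat \<Rightarrow> (nat \<Rightarrow> nat \<Rightarrow> complex) \<Rightarrow> nat set \<Rightarrow> complex" where
  "minor k A J = (let cols = sorted_list_of_set J in
     \<Sum>p | p permutes {1..k}. of_int (sign p) * (\<Prod>i=1..k. A i (cols ! (p i - 1))))"

definition alpha_tilde :: "nat \<Rightarrow> (nat \<Rightarrow> complex) \<Rightarrow> (nat \<Rightarrow> complex) \<Rightarrow> nat set \<Rightarrow> complex" where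
  "alpha_tilde k lam kap J =
     (minor k (Atilde lam kap) J * KJ kap J) / (minor k (Atilde lam kap) {1..k} * KJ kap {1..k})"

definition alpha_tilde_expl :: "nat \<Rightarrow> nat \<Rightarrow> (nat \<Rightarrow> complex) \<Rightarrow> (nat \<Rightarrow> complex) \<Rightarrow> nat set \<Rightarrow> complex" where
  "alpha_tilde_expl g k lam kap J =
     (KJ kap J)^2 / (KJ kap {1..k})^2 * (\<Prod>l=1..g. lam l powi (BTc g (cvec g k J) (l+1)))"

definition a_coef :: "nat \<Rightarrow> (nat \<Rightarrow> int) \<Rightarrow> (nat \<Rightarrow> complex) \<Rightarrow> complex" where
  "a_coef g c kap =
     (\<Prod>i=1..g. (kap (i+1) - kap 1) powi (-2 * (c i)^2)) *
     (\<Prod>(i,j)\<in>{(i,j). 1 \<le> i \<and> i < j \<and> j \<le> g}.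
        ((kap (i+1) - kap (j+1))^2 / ((kap (i+1) - kap 1)^2 * (kap (j+1) - kap 1)^2))
          powi (c i * c j))"

definition alpha_psi :: "nat \<Rightarrow> nat \<Rightarrow> (nat \<Rightarrow> complex) \<Rightarrow> (nat \<Rightarrow> complex) \<Rightarrow> nat set \<Rightarrow> complex" where
  "alpha_psi g k beta kap J =
     a_coef g (cvec g k J) kap * (\<Prod>l=1..g. beta l powi (cvec g k J l))"

text \<open>Parameter domain: the torus parameters (lambda resp. beta) nonzero and the
  kappa_i pairwise distinct (a dense open set where both maps are defined and land
  in (C^*)^(n choose k) x WP^(3g-1)).\<close>
definition params_ok :: "nat \<Rightarrow> (nat \<Rightarrow> complex) \<Rightarrow> (nat \<Rightarrow> complex) \<Rightarrow> bool" where
  "params_ok g f kap \<longleftrightarrow> (\<forall>l\<in>{1..g}. f l \<noteq> 0) \<and> inj_on kap {1..g+1}"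

text \<open>Point of the affine cone: alpha coordinates, and t . (U,V,W) with weights 1,2,3.\<close>
definition cone_pt :: "nat \<Rightarrow> nat \<Rightarrow> (nat set \<Rightarrow> complex) \<Rightarrow> (nat \<Rightarrow> complex) \<Rightarrow> complex
                        \<Rightarrow> coord \<Rightarrow> complex" where
  "cone_pt g k alpha kap t x = (case x of
      Al J \<Rightarrow> (if J \<in> ksubsets (g+1) k then alpha J else 0)
    | Crd j i \<Rightarrow> (if j \<in> {1,2,3} \<and> i \<in> {1..g} then t ^ j * BK g kap i j else 0))"

definition psi_tilde_cone :: "nat \<Rightarrow> nat \<Rightarrow> (coord \<Rightarrow> complex) set" where
  "psi_tilde_cone g k = {cone_pt g k (alpha_tilde k lam kap) kap t | lam kap t.
                          params_ok g lam kap \<and> t \<noteq> 0}"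

definition psi_cone :: "nat \<Rightarrow> nat \<Rightarrow> (coord \<Rightarrow> complex) set" where
  "psi_cone g k = {cone_pt g k (alpha_psi g k beta kap) kap t | beta kap t.
                    params_ok g beta kap \<and> t \<noteq> 0}"

end

theory Submission imports Defs "Jordan_Normal_Form.Determinant" begin

definition vprod :: "nat \<Rightarrow> (nat \<Rightarrow> 'a::comm_ring_1) \<Rightarrow> 'a" where
 "vprod n x = (\<Prod>j<n. \<Prod>i<j. x j - x i)"

lemma vprod_Suc: "vprod (Suc m) x = (\<Prod>j<m. x (Suc j) - x 0) * vprod m (\<lambda>j. x (Suc j))"
  unfolding vprod_def
  by (simp add: prod.lessThan_Suc_shift prod.distrib del: prod.lessThan_Suc)

lemma det_col_scale:
  assumes A: "A \<in> carrier_mat n n"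
  shows "det (mat n n (\<lambda>(i,j). c j * A $$ (i,j))) = (\<Prod>j<n. c j) * det A"
proof -
  have "det (mat n n (\<lambda>(i,j). c j * A $$ (i,j))) =
     (\<Sum>p | p permutes {0..<n}. of_int (sign p) * (\<Prod>i=0..<n. c (p i) * A $$ (i, p i)))"
    by (subst det_def'[of _ n]) auto
  also have "\<dots> = (\<Sum>p | p permutes {0..<n}. (\<Prod>j<n. c j) * (of_int (sign p) * (\<Prod>i=0..<n. A $$ (i, p i))))"
  proof (rule sum.cong[OF refl])
    fix p assume "p \<in> {p. p permutes {0..<n}}"
    hence p: "p permutes {0..<n}" by simp
    have "(\<Prod>i=0..<n. c (p i)) = (\<Prod>j=0..<n. c j)"
      using prod.permute[OF p, of c] by (simp add: comp_def)
    thus "of_int (sign p) * (\<Prod>i=0..<n. c (p i) * A $$ (i, p i)) =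
          (\<Prod>j<n. c j) * (of_int (sign p) * (\<Prod>i=0..<n. A $$ (i, p i)))"
      by (simp add: prod.distrib atLeast0LessThan mult_ac)
  qed
  also have "\<dots> = (\<Prod>j<n. c j) * det A"
    by (subst det_def'[OF A]) (simp add: sum_distrib_left)
  finally show ?thesis .
qed

lemma vandermonde: "det (mat n n (\<lambda>(i,j). x j ^ i)) = vprod n (x :: nat \<Rightarrow> 'a :: comm_ring_1)"
proof (induction n arbitrary: x)
  case 0
  show ?case by (simp add: vprod_def)
next
  case (Suc m)
  define V where "V = mat (Suc m) (Suc m) (\<lambda>(i,j). x j ^ i)"
  define E where "E = mat (Suc m) (Suc m) (\<lambda>(i,j). (if i = j then 1 else 0) + (if i = Suc j then - x 0 else 0))"
  have Vc: "V \<in> carrier_mat (Suc m) (Suc m)" and Ec: "E \<in> carrier_mat (Suc m) (Suc m)"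
    by (auto simp: V_def E_def)
  have dE: "det E = 1"
  proof -
    have "det E = prod_list (diag_mat E)"
      by (rule det_lower_triangular[OF _ Ec]) (auto simp: E_def)
    also have "diag_mat E = map (\<lambda>_. 1) [0..<Suc m]"
      by (auto simp: diag_mat_def E_def)
    moreover have "prod_list (map (\<lambda>_. 1::'a) xs) = 1" for xs :: "nat list" by (induct xs) auto
    ultimately show ?thesis by simp
  qed
  define W where "W = E * V"
  have Wc: "W \<in> carrier_mat (Suc m) (Suc m)" using Ec Vc by (simp add: W_def)
  have W: "W $$ (i,j) = (if i = 0 then 1 else x j ^ (i-1) * (x j - x 0))"
    if ij: "i < Suc m" "j < Suc m" for i j
  proof -
    have "W $$ (i,j) = (\<Sum>l = 0..<Suc m. ((if i = l then 1 else 0) + (if i = Suc l then - x 0 else 0)) * x j ^ l)"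
      using ij Ec Vc unfolding W_def
      by (auto simp: scalar_prod_def E_def V_def intro!: sum.cong)
    also have "\<dots> = (\<Sum>l = 0..<Suc m. (if i = l then x j ^ l else 0)) + (\<Sum>l = 0..<Suc m. (if i = Suc l then - x 0 * x j ^ l else 0))"
      by (subst sum.distrib[symmetric]) (auto intro!: sum.cong)
    also have "\<dots> = (if i = 0 then 1 else x j ^ (i-1) * (x j - x 0))"
    proof (cases i)
      case 0 thus ?thesis by simp
    next
      case (Suc i')
      have "(\<Sum>l = 0..<Suc m. (if i = Suc l then - x 0 * x j ^ l else 0)) = (\<Sum>l = 0..<Suc m. (if l = i' then - x 0 * x j ^ l else 0))"
        using Suc by (auto intro!: sum.cong)
      moreover have "(\<Sum>l = 0..<Suc m. (if l = i' then - x 0 * x j ^ l else 0)) = - x 0 * x j ^ i'"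
        using Suc ij by (simp add: sum.delta)
      moreover have "(\<Sum>l = 0..<Suc m. (if i = l then x j ^ l else 0)) = x j ^ i"
        using ij by (simp add: sum.delta')
      ultimately show ?thesis using Suc by (simp add: algebra_simps)
    qed
    finally show ?thesis .
  qed
  have "det V = det W" using det_mult[OF Ec Vc] dE by (simp add: W_def)
  also have "det W = (\<Sum>i<Suc m. W $$ (i,0) * cofactor W i 0)"
    by (rule laplace_expansion_column[OF Wc]) simp
  also have "\<dots> = cofactor W 0 0"
    by (subst sum.lessThan_Suc_shift) (simp add: W)
  also have "\<dots> = det (mat_delete W 0 0)" by (simp add: cofactor_def)
  also have "mat_delete W 0 0 = mat m m (\<lambda>(i,j). (x (Suc j) - x 0) * (mat m m (\<lambda>(i,j). x (Suc j) ^ i)) $$ (i,j))"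
    using Wc by (intro eq_matI) (auto simp: mat_delete_def W mult.commute)
  also have "det \<dots> = (\<Prod>j<m. x (Suc j) - x 0) * vprod m (\<lambda>j. x (Suc j))"
    by (subst det_col_scale) (auto simp: Suc.IH)
  finally show ?case by (simp add: V_def vprod_Suc)
qed


lemma Suc_img: "Suc ` {0..<k} = {1..k}"
  by (auto simp: image_iff)

lemma bij_Suc: "bij_betw Suc {0..<k} {1..k}"
  unfolding bij_betw_def using Suc_img by auto

lemma minor_det:
  "minor k A J = det (mat k k (\<lambda>(i,j). A (Suc i) (sorted_list_of_set J ! j)))"
proof -
  define cols where "cols = sorted_list_of_set J"
  define G where "G = (\<lambda>q. of_int (sign q) * (\<Prod>i=1..k. A i (cols ! (q i - 1))) :: complex)"
  define phi where "phi = (\<lambda>\<pi> x. if x \<in> {1..k} then Suc (\<pi> (inv_into {0..<k} Suc x)) else x)"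
  have bp: "bij_betw phi {\<pi>. \<pi> permutes {0..<k}} {\<pi>. \<pi> permutes {1..k}}"
    unfolding phi_def by (rule bij_betw_permutations[OF bij_Suc])
  have inv: "inv_into {0..<k} Suc x = x - 1" if "x \<in> {1..k}" for x
  proof -
    have "x = Suc (x - 1)" using that by auto
    moreover have "x - 1 \<in> {0..<k}" using that by auto
    ultimately show ?thesis by (metis inv_into_f_f inj_Suc inj_on_subset subset_UNIV)
  qed
  have "minor k A J = sum G {q. q permutes {1..k}}"
    by (simp add: minor_def G_def cols_def)
  also have "\<dots> = (\<Sum>\<pi> | \<pi> permutes {0..<k}. G (phi \<pi>))"
    by (rule sum.reindex_bij_betw[OF bp, symmetric])
  also have "\<dots> = (\<Sum>\<pi> | \<pi> permutes {0..<k}. of_int (sign \<pi>) * (\<Prod>i=0..<k. A (Suc i) (cols ! \<pi> i)))"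
  proof (rule sum.cong[OF refl])
    fix \<pi> assume "\<pi> \<in> {\<pi>. \<pi> permutes {0..<k}}"
    hence p: "\<pi> permutes {0..<k}" by simp
    have "phi \<pi> = map_permutation {0..<k} Suc \<pi>"
      unfolding phi_def map_permutation_def restrict_id_def Suc_img by (auto simp: fun_eq_iff)
    hence s: "sign (phi \<pi>) = sign \<pi>"
      using sign_map_permutation[of Suc "{0..<k}" \<pi>] p by simp
    have "(\<Prod>i=1..k. A i (cols ! (phi \<pi> i - 1))) = (\<Prod>i\<in>Suc ` {0..<k}. A i (cols ! (phi \<pi> i - 1)))"
      by (simp only: Suc_img)
    also have "\<dots> = (\<Prod>i=0..<k. A (Suc i) (cols ! (phi \<pi> (Suc i) - 1)))"
      by (subst prod.reindex) auto
    also have "\<dots> = (\<Prod>i=0..<k. A (Suc i) (cols ! \<pi> i))"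
      by (rule prod.cong[OF refl]) (simp add: phi_def inv)
    finally show "G (phi \<pi>) = of_int (sign \<pi>) * (\<Prod>i=0..<k. A (Suc i) (cols ! \<pi> i))"
      by (simp add: G_def s)
  qed
  also have "\<dots> = det (mat k k (\<lambda>(i,j). A (Suc i) (cols ! j)))"
  proof (subst det_def'[of _ k], simp, rule sum.cong[OF refl], rule arg_cong[where f = "\<lambda>x. _ * x"])
    fix \<pi> assume "\<pi> \<in> {\<pi>. \<pi> permutes {0..<k}}"
    hence p: "\<pi> permutes {0..<k}" by simp
    show "(\<Prod>i=0..<k. A (Suc i) (cols ! \<pi> i)) = (\<Prod>i=0..<k. mat k k (\<lambda>(i,j). A (Suc i) (cols ! j)) $$ (i, \<pi> i))"
      by (rule prod.cong[OF refl]) (use permutes_in_image[OF p] in auto)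
  qed
  finally show ?thesis by (simp add: cols_def)
qed


definition dd :: "(nat \<Rightarrow> complex) \<Rightarrow> nat \<Rightarrow> complex" where
  "dd lam j = (if j = 1 then 1 else lam (j - 1))"

lemma minor_Atilde:
  assumes fin: "finite J" and cJ: "card J = k"
  shows "minor k (Atilde lam kap) J = KJ kap J * (\<Prod>j\<in>J. dd lam j)"
proof -
  define cols where "cols = sorted_list_of_set J"
  have len: "length cols = k" using cJ by (simp add: cols_def)
  have dist: "distinct cols" by (simp add: cols_def)
  have setc: "set cols = J" using fin by (simp add: cols_def)
  have ss: "sorted_wrt (<) cols" by (simp add: cols_def strict_sorted_list_of_set)
  have so: "sorted cols" by (simp add: cols_def)
  have bn: "bij_betw ((!) cols) {..<k} J" using bij_betw_nth[OF dist] len setc by auto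
  define ix where "ix = inv_into {..<k} ((!) cols)"
  have ix1: "ix x < k" "cols ! ix x = x" if "x \<in> J" for x
    using that bij_betw_inv_into[OF bn] bn f_inv_into_f[of x "(!) cols" "{..<k}"]
    unfolding ix_def bij_betw_def by auto
  have ix2: "ix (cols ! i) = i" if "i < k" for i
    using that bn inv_into_f_f[of "(!) cols" "{..<k}" i] unfolding ix_def bij_betw_def by auto
  have "minor k (Atilde lam kap) J = det (mat k k (\<lambda>(i,j). Atilde lam kap (Suc i) (cols ! j)))"
    by (simp add: minor_det cols_def)
  also have "mat k k (\<lambda>(i,j). Atilde lam kap (Suc i) (cols ! j)) =
     mat k k (\<lambda>(i,j). dd lam (cols ! j) * (mat k k (\<lambda>(i,j). kap (cols ! j) ^ i)) $$ (i,j))"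
    by (intro eq_matI) (auto simp: Atilde_def dd_def)
  also have "det \<dots> = (\<Prod>j<k. dd lam (cols ! j)) * vprod k (\<lambda>j. kap (cols ! j))"
    by (subst det_col_scale) (auto simp: vandermonde)
  also have "(\<Prod>j<k. dd lam (cols ! j)) = (\<Prod>j\<in>J. dd lam j)"
    by (rule prod.reindex_bij_betw[OF bij_betw_nth[OF dist]]) (auto simp: len setc)
  also have "vprod k (\<lambda>j. kap (cols ! j)) = KJ kap J"
  proof -
    have "vprod k (\<lambda>j. kap (cols ! j)) = (\<Prod>(j,i)\<in>Sigma {..<k} (\<lambda>j. {..<j}). kap (cols ! j) - kap (cols ! i))"
      unfolding vprod_def by (subst prod.Sigma) auto
    also have "\<dots> = (\<Prod>(a,b)\<in>{(i,j). i \<in> J \<and> j \<in> J \<and> i < j}. kap b - kap a)"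
    proof (rule prod.reindex_bij_witness[where j = "\<lambda>(j,i). (cols ! i, cols ! j)"
          and i = "\<lambda>(a,b). (ix b, ix a)"])
      fix a assume "a \<in> Sigma {..<k} (\<lambda>j. {..<j})"
      then obtain j i where a: "a = (j,i)" "j < k" "i < j" by auto
      show "(case case a of (j, i) \<Rightarrow> (cols ! i, cols ! j) of (a, b) \<Rightarrow> (ix b, ix a)) = a"
        using a ix2 by simp
      show "(case a of (j, i) \<Rightarrow> (cols ! i, cols ! j)) \<in> {(i, j). i \<in> J \<and> j \<in> J \<and> i < j}"
        using a len setc sorted_wrt_nth_less[OF ss, of i j] by auto
      show "(case case a of (j, i) \<Rightarrow> (cols ! i, cols ! j) of (a, b) \<Rightarrow> kap b - kap a) =
            (case a of (j, i) \<Rightarrow> kap (cols ! j) - kap (cols ! i))" using a by simp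
    next
      fix b assume "b \<in> {(i, j). i \<in> J \<and> j \<in> J \<and> i < j}"
      then obtain x y where b: "b = (x,y)" "x \<in> J" "y \<in> J" "x < y" by auto
      have ix: "ix x < k" "cols ! ix x = x" using b ix1 by auto
      have iy: "ix y < k" "cols ! ix y = y" using b ix1 by auto
      have lt: "ix x < ix y"
      proof (rule ccontr)
        assume "\<not> ix x < ix y"
        hence "cols ! ix y \<le> cols ! ix x"
          using sorted_nth_mono[OF so, of "ix y" "ix x"] ix len by auto
        thus False using ix iy b by auto
      qed
      show "(case case b of (a, b) \<Rightarrow> (ix b, ix a) of (j, i) \<Rightarrow> (cols ! i, cols ! j)) = b"
        using b ix iy by simp
      show "(case b of (a, b) \<Rightarrow> (ix b, ix a)) \<in> Sigma {..<k} (\<lambda>j. {..<j})"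
        using b iy lt by auto
    qed
    finally show ?thesis by (simp add: KJ_def)
  qed
  finally show ?thesis by (simp add: mult.commute)
qed

lemma powi_sum: "(x::complex) \<noteq> 0 \<Longrightarrow> x powi (\<Sum>i\<in>A. f i) = (\<Prod>i\<in>A. x powi f i)"
proof (induction A rule: infinite_finite_induct)
  case (insert a A) thus ?case by (simp add: power_int_add)
qed auto

lemma prod_powi: "(\<Prod>i\<in>A. f i :: complex) powi n = (\<Prod>i\<in>A. f i powi n)"
proof (induction A rule: infinite_finite_induct)
  case (insert a A) thus ?case by (simp add: power_int_mult_distrib)
qed auto

section \<open>B^T c\<close>

lemma Bmat_Suc: "1 \<le> i \<Longrightarrow> Bmat l (Suc i) = (if l = i then -1 else 0)"
  by (auto simp: Bmat_def)

lemma BTc_Suc: "i \<in> {1..g} \<Longrightarrow> BTc g c (Suc i) = - c i"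
proof -
  assume i: "i \<in> {1..g}"
  have "BTc g c (Suc i) = (\<Sum>l=1..g. (if l = i then - c l else 0))"
    unfolding BTc_def using i by (intro sum.cong) (auto simp: Bmat_Suc)
  also have "\<dots> = - c i" using i by (simp add: sum.delta')
  finally show ?thesis .
qed

lemma BTc_1: "BTc g c 1 = (\<Sum>l=1..g. c l)"
  unfolding BTc_def by (simp add: Bmat_def)

lemma svec_indic: "svec k m = indic {1..k} m"
  by (simp add: svec_def indic_def)

lemma indic_sum:
  assumes "S \<subseteq> {1..g+1}"
  shows "(\<Sum>l=1..g. indic S (l+1)) = int (card (S - {1}))"
proof -
  have "(\<Sum>l=1..g. indic S (l+1)) = (\<Sum>m\<in>Suc ` {1..g}. indic S m)"
    by (subst sum.reindex) auto
  also have "Suc ` {1..g} = {2..g+1}" by (simp add: image_Suc_atLeastAtMost)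
  also have "(\<Sum>m\<in>{2..g+1}. indic S m) = (\<Sum>m\<in>{m\<in>{2..g+1}. m \<in> S}. 1)"
    by (subst sum.inter_filter) (auto simp: indic_def)
  also have "{m\<in>{2..g+1}. m \<in> S} = S - {1}" using assms by auto
  finally show ?thesis by simp
qed

definition c0 :: "nat \<Rightarrow> nat \<Rightarrow> nat set \<Rightarrow> nat \<Rightarrow> int" where
  "c0 g k J = (\<lambda>i. if i \<in> {1..g} then svec k (Suc i) - indic J (Suc i) else 0)"

lemma c0_prop:
  assumes J: "J \<in> ksubsets (g+1) k" and k: "1 \<le> k" "k \<le> g"
  shows "\<forall>m\<in>{1..g+1}. BTc g (c0 g k J) m + svec k m = indic J m"
proof
  fix m assume m: "m \<in> {1..g+1}"
  have JS: "J \<subseteq> {1..g+1}" and cJ: "card J = k" using J by (auto simp: ksubsets_def)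
  have finJ: "finite J" using JS finite_subset by blast
  show "BTc g (c0 g k J) m + svec k m = indic J m"
  proof (cases "m = 1")
    case True
    have "BTc g (c0 g k J) 1 = (\<Sum>l=1..g. svec k (l+1) - indic J (l+1))"
      unfolding BTc_1 by (auto simp: c0_def intro!: sum.cong)
    also have "\<dots> = (\<Sum>l=1..g. indic {1..k} (l+1)) - (\<Sum>l=1..g. indic J (l+1))"
      by (simp add: sum_subtractf svec_indic)
    also have "\<dots> = int (card ({1..k} - {1})) - int (card (J - {1}))"
      using indic_sum[OF JS] indic_sum[of "{1..k}" g] k by simp
    also have "int (card ({1..k} - {1})) = int k - 1" using k by simp
    also have "int (card (J - {1})) = int k - indic J 1"
      using cJ finJ k by (auto simp: indic_def card_Diff_singleton_if)
    finally show ?thesis using True k by (simp add: svec_def)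
  next
    case False
    then obtain i where i: "m = Suc i" "i \<in> {1..g}" using m by (cases m) auto
    show ?thesis using i by (simp add: BTc_Suc c0_def)
  qed
qed

lemma cvec_eq:
  assumes J: "J \<in> ksubsets (g+1) k" and k: "1 \<le> k" "k \<le> g"
  shows "cvec g k J = c0 g k J"
  unfolding cvec_def
proof (rule the_equality)
  show "(\<forall>m\<in>{1..g + 1}. BTc g (c0 g k J) m + svec k m = indic J m) \<and> (\<forall>i. i \<notin> {1..g} \<longrightarrow> c0 g k J i = 0)"
    using c0_prop[OF assms] by (simp add: c0_def)
next
  fix c assume c: "(\<forall>m\<in>{1..g + 1}. BTc g c m + svec k m = indic J m) \<and> (\<forall>i. i \<notin> {1..g} \<longrightarrow> c i = 0)"
  show "c = c0 g k J"
  proof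
    fix i show "c i = c0 g k J i"
    proof (cases "i \<in> {1..g}")
      case True
      hence "BTc g c (Suc i) + svec k (Suc i) = indic J (Suc i)" using c by auto
      thus ?thesis using True by (simp add: BTc_Suc c0_def)
    qed (use c in \<open>auto simp: c0_def\<close>)
  qed
qed

lemma cvec_prop:
  assumes J: "J \<in> ksubsets (g+1) k" and k: "1 \<le> k" "k \<le> g"
  shows "\<forall>m\<in>{1..g+1}. BTc g (cvec g k J) m + svec k m = indic J m"
  using c0_prop[OF assms] cvec_eq[OF assms] by simp


definition PP :: "nat \<Rightarrow> (nat \<times> nat) set" where
  "PP g = {(a,b). a \<in> {1..g+1} \<and> b \<in> {1..g+1} \<and> a < b}"

definition P' :: "nat \<Rightarrow> (nat \<times> nat) set" where
  "P' g = {(i,j). 1 \<le> i \<and> i < j \<and> j \<le> g}"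

definition qq :: "(nat \<Rightarrow> complex) \<Rightarrow> nat \<Rightarrow> nat \<Rightarrow> complex" where
  "qq kap a b = (kap b - kap a)^2"

definition QF :: "nat \<Rightarrow> (nat \<Rightarrow> complex) \<Rightarrow> (nat \<Rightarrow> int) \<Rightarrow> complex" where
  "QF g kap w = (\<Prod>(a,b)\<in>PP g. qq kap a b powi (w a * w b))"

definition LF :: "nat \<Rightarrow> (nat \<Rightarrow> complex) \<Rightarrow> (nat \<Rightarrow> int) \<Rightarrow> (nat \<Rightarrow> int) \<Rightarrow> complex" where
  "LF g kap w z = (\<Prod>(a,b)\<in>PP g. qq kap a b powi (w a * z b + z a * w b))"

lemma finite_PP: "finite (PP g)"
  by (rule finite_subset[of _ "{1..g+1} \<times> {1..g+1}"]) (auto simp: PP_def)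

lemma qq_nz:
  assumes inj: "inj_on kap {1..g+1}" and x: "x \<in> PP g"
  shows "qq kap (fst x) (snd x) \<noteq> 0"
proof -
  obtain a b where ab: "x = (a,b)" "a \<in> {1..g+1}" "b \<in> {1..g+1}" "a < b" using x by (auto simp: PP_def)
  have "kap a \<noteq> kap b" using inj_onD[OF inj _ ab(2,3)] ab(4) by auto
  thus ?thesis using ab by (simp add: qq_def)
qed

lemma QF_add:
  assumes inj: "inj_on kap {1..g+1}"
  shows "QF g kap (\<lambda>m. w m + z m) = QF g kap w * QF g kap z * LF g kap w z"
proof -
  have "QF g kap (\<lambda>m. w m + z m) = (\<Prod>x\<in>PP g. (qq kap (fst x) (snd x) powi (w (fst x) * w (snd x))) *
      (qq kap (fst x) (snd x) powi (z (fst x) * z (snd x))) *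
      (qq kap (fst x) (snd x) powi (w (fst x) * z (snd x) + z (fst x) * w (snd x))))"
    unfolding QF_def
  proof (rule prod.cong[OF refl], goal_cases)
    case (1 x)
    hence x: "x \<in> PP g" .
    have nz: "qq kap (fst x) (snd x) \<noteq> 0" by (rule qq_nz[OF inj x])
    have e: "(w (fst x) + z (fst x)) * (w (snd x) + z (snd x)) =
      w (fst x) * w (snd x) + z (fst x) * z (snd x) + (w (fst x) * z (snd x) + z (fst x) * w (snd x))"
      by (simp add: algebra_simps)
    show ?case
      by (simp add: case_prod_unfold e power_int_add nz)
  qed
  also have "\<dots> = QF g kap w * QF g kap z * LF g kap w z"
    by (simp add: QF_def LF_def prod.distrib case_prod_unfold)
  finally show ?thesis .
qed

lemma QF_cong:
  assumes "\<And>m. m \<in> {1..g+1} \<Longrightarrow> w m = z m"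
  shows "QF g kap w = QF g kap z"
  unfolding QF_def using assms by (intro prod.cong) (auto simp: PP_def)

lemma KJ_sq:
  assumes J: "J \<subseteq> {1..g+1}"
  shows "KJ kap J ^ 2 = QF g kap (indic J)"
proof -
  have "KJ kap J ^ 2 = (\<Prod>(i,j)\<in>{(i,j). i \<in> J \<and> j \<in> J \<and> i < j}. qq kap i j)"
    by (simp add: KJ_def prod_power_distrib qq_def case_prod_unfold)
  also have "\<dots> = QF g kap (indic J)"
    unfolding QF_def
    by (rule prod.mono_neutral_cong_left[OF finite_PP]) (use J in \<open>auto simp: PP_def indic_def split: if_splits\<close>)
  finally show ?thesis .
qed

lemma KJ_nz:
  assumes J: "J \<subseteq> {1..g+1}" and inj: "inj_on kap {1..g+1}"
  shows "KJ kap J \<noteq> 0"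
proof -
  have fin: "finite {(i,j). i \<in> J \<and> j \<in> J \<and> i < j}"
    by (rule finite_subset[of _ "J \<times> J"]) (use J finite_subset in auto)
  show ?thesis unfolding KJ_def
    using J inj by (subst prod_zero_iff[OF fin]) (auto simp: inj_on_def)
qed

lemma LF_zero: "LF g kap w (\<lambda>m. 0) = 1"
  by (simp add: LF_def)

lemma LF_lin:
  assumes inj: "inj_on kap {1..g+1}" and fin: "finite L"
  shows "LF g kap w (\<lambda>m. \<Sum>l\<in>L. c l * z l m) = (\<Prod>l\<in>L. LF g kap w (z l) powi c l)"
  using fin
proof (induction L rule: finite_induct)
  case empty thus ?case by (simp add: LF_zero)
next
  case (insert x L)
  have "LF g kap w (\<lambda>m. \<Sum>l\<in>insert x L. c l * z l m) =
    (\<Prod>y\<in>PP g. (qq kap (fst y) (snd y) powi (w (fst y) * z x (snd y) + z x (fst y) * w (snd y))) powi c x *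
       qq kap (fst y) (snd y) powi (w (fst y) * (\<Sum>l\<in>L. c l * z l (snd y)) + (\<Sum>l\<in>L. c l * z l (fst y)) * w (snd y)))"
    unfolding LF_def
  proof (rule prod.cong[OF refl], goal_cases)
    case (1 y)
    hence y: "y \<in> PP g" .
    have nz: "qq kap (fst y) (snd y) \<noteq> 0" by (rule qq_nz[OF inj y])
    have e: "w (fst y) * (\<Sum>l\<in>insert x L. c l * z l (snd y)) + (\<Sum>l\<in>insert x L. c l * z l (fst y)) * w (snd y) =
       (w (fst y) * z x (snd y) + z x (fst y) * w (snd y)) * c x +
       (w (fst y) * (\<Sum>l\<in>L. c l * z l (snd y)) + (\<Sum>l\<in>L. c l * z l (fst y)) * w (snd y))"
      using insert by (simp add: algebra_simps)
    show ?case
      by (simp add: case_prod_unfold e power_int_add nz power_int_mult)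
  qed
  also have "\<dots> = LF g kap w (z x) powi c x * LF g kap w (\<lambda>m. \<Sum>l\<in>L. c l * z l m)"
    by (simp add: LF_def prod.distrib case_prod_unfold prod_powi)
  finally show ?case using insert by simp
qed

lemma LF_nz: "inj_on kap {1..g+1} \<Longrightarrow> LF g kap w z \<noteq> 0"
  unfolding LF_def using qq_nz[of kap g] finite_PP
  by (subst prod_zero_iff) (auto simp: case_prod_unfold)

lemma LF_BTc:
  assumes inj: "inj_on kap {1..g+1}"
  shows "LF g kap w (BTc g c) = (\<Prod>l=1..g. LF g kap w (\<lambda>m. Bmat l m) powi c l)"
proof -
  have "BTc g c = (\<lambda>m. \<Sum>l\<in>{1..g}. c l * Bmat l m)"
    unfolding BTc_def by (intro ext sum.cong) auto
  thus ?thesis using LF_lin[OF inj, of "{1..g}" w c "\<lambda>l m. Bmat l m"] by simp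
qed


lemma finite_P': "finite (P' g)"
  by (rule finite_subset[of _ "{1..g} \<times> {1..g}"]) (auto simp: P'_def)

lemma prodPP:
  "(\<Prod>(a,b)\<in>PP g. F a b) = (\<Prod>i=1..g. F 1 (i+1)) * (\<Prod>(i,j)\<in>P' g. F (i+1) (j+1))"
proof -
  let ?A = "(\<lambda>i. (1::nat, i+1)) ` {1..g}" and ?B = "(\<lambda>(i,j). (i+1,j+1::nat)) ` P' g"
  have split: "PP g = ?A \<union> ?B"
  proof
    show "PP g \<subseteq> ?A \<union> ?B"
    proof
      fix x assume "x \<in> PP g"
      then obtain a b where ab: "x = (a,b)" "1 \<le> a" "b \<le> g+1" "a < b" by (auto simp: PP_def)
      show "x \<in> ?A \<union> ?B"
      proof (cases "a = 1")
        case True thus ?thesis using ab by (intro UnI1 image_eqI[where x="b-1"]) auto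
      next
        case False thus ?thesis using ab
          by (intro UnI2 image_eqI[where x="(a-1,b-1)"]) (auto simp: P'_def)
      qed
    qed
    show "?A \<union> ?B \<subseteq> PP g" by (auto simp: PP_def P'_def)
  qed
  have disj: "?A \<inter> ?B = {}" by (auto simp: P'_def)
  have "(\<Prod>(a,b)\<in>PP g. F a b) = (\<Prod>(a,b)\<in>?A. F a b) * (\<Prod>(a,b)\<in>?B. F a b)"
    unfolding split by (rule prod.union_disjoint) (use disj finite_P' in auto)
  also have "(\<Prod>(a,b)\<in>?A. F a b) = (\<Prod>i=1..g. F 1 (i+1))"
    by (subst prod.reindex) (auto simp: inj_on_def)
  also have "(\<Prod>(a,b)\<in>?B. F a b) = (\<Prod>(i,j)\<in>P' g. F (i+1) (j+1))"
    by (subst prod.reindex) (auto simp: inj_on_def case_prod_unfold)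
  finally show ?thesis .
qed

lemma BTc_Suc': "i \<in> {1..g} \<Longrightarrow> BTc g c (i+1) = - c i"
  using BTc_Suc by simp

lemma QF_BTc:
  "QF g kap (BTc g c) = (\<Prod>i=1..g. qq kap 1 (i+1) powi ((\<Sum>l=1..g. c l) * (- c i))) *
                         (\<Prod>(i,j)\<in>P' g. qq kap (i+1) (j+1) powi (c i * c j))"
proof -
  have "QF g kap (BTc g c) = (\<Prod>i=1..g. qq kap 1 (i+1) powi (BTc g c 1 * BTc g c (i+1))) *
       (\<Prod>(i,j)\<in>P' g. qq kap (i+1) (j+1) powi (BTc g c (i+1) * BTc g c (j+1)))"
    unfolding QF_def by (rule prodPP)
  also have "(\<Prod>i=1..g. qq kap 1 (i+1) powi (BTc g c 1 * BTc g c (i+1))) =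
             (\<Prod>i=1..g. qq kap 1 (i+1) powi ((\<Sum>l=1..g. c l) * (- c i)))"
    by (rule prod.cong[OF refl]) (simp add: BTc_1 BTc_Suc' del: One_nat_def)
  also have "(\<Prod>(i,j)\<in>P' g. qq kap (i+1) (j+1) powi (BTc g c (i+1) * BTc g c (j+1))) =
             (\<Prod>(i,j)\<in>P' g. qq kap (i+1) (j+1) powi (c i * c j))"
    by (rule prod.cong[OF refl]) (auto simp: BTc_Suc BTc_Suc' P'_def)
  finally show ?thesis .
qed

lemma P'_Sigma1: "P' g = Sigma {1..g} (\<lambda>i. {i<..g})"
  by (auto simp: P'_def)

lemma prodP'1: "(\<Prod>(i,j)\<in>P' g. F i j) = (\<Prod>i=1..g. \<Prod>j\<in>{i<..g}. F i j)"
  unfolding P'_Sigma1 by (subst prod.Sigma) auto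

lemma prodP'2: "(\<Prod>(i,j)\<in>P' g. F i j) = (\<Prod>j=1..g. \<Prod>i\<in>{1..<j}. F i j)"
proof -
  have "P' g = (\<lambda>(j,i). (i,j)) ` Sigma {1..g} (\<lambda>j. {1..<j})"
    by (auto simp: P'_def image_iff)
  hence "(\<Prod>(i,j)\<in>P' g. F i j) = (\<Prod>(j,i)\<in>Sigma {1..g} (\<lambda>j. {1..<j}). F i j)"
    by (simp add: prod.reindex inj_on_def case_prod_unfold)
  also have "\<dots> = (\<Prod>j=1..g. \<Prod>i\<in>{1..<j}. F i j)"
    by (subst prod.Sigma) auto
  finally show ?thesis .
qed

lemma a_coef_QF:
  assumes inj: "inj_on kap {1..g+1}"
  shows "a_coef g c kap = QF g kap (BTc g c)"
proof -
  define X where "X = (\<lambda>i. qq kap 1 (i+1))"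
  define \<sigma> where "\<sigma> = (\<Sum>l=1..g. c l)"
  have Xnz: "X i \<noteq> 0" if "i \<in> {1..g}" for i
    using qq_nz[OF inj, of "(1, i+1)"] that by (auto simp: X_def PP_def)
  have f1: "(\<Prod>i=1..g. (kap (i+1) - kap 1) powi (-2 * (c i)^2)) = (\<Prod>i=1..g. X i powi (- ((c i)^2)))"
  proof (rule prod.cong[OF refl])
    fix i
    have "(kap (i+1) - kap 1) powi (-2 * (c i)^2) = (kap (i+1) - kap 1) powi (2 * (- ((c i)^2)))" by simp
    also have "\<dots> = X i powi (- ((c i)^2))" unfolding power_int_mult by (simp add: X_def qq_def)
    finally show "(kap (i+1) - kap 1) powi (-2 * (c i)^2) = X i powi (- ((c i)^2))" .
  qed
  have f2: "(\<Prod>(i,j)\<in>{(i,j). 1 \<le> i \<and> i < j \<and> j \<le> g}.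
        ((kap (i+1) - kap (j+1))^2 / ((kap (i+1) - kap 1)^2 * (kap (j+1) - kap 1)^2)) powi (c i * c j))
     = (\<Prod>(i,j)\<in>P' g. qq kap (i+1) (j+1) powi (c i * c j) * (X i powi (- (c i * c j)) * X j powi (- (c i * c j))))"
    unfolding P'_def[symmetric]
  proof (rule prod.cong[OF refl], clarify)
    fix i j
    have "(kap (i+1) - kap (j+1))^2 = qq kap (i+1) (j+1)" by (simp add: qq_def power2_commute)
    moreover have "(kap (i+1) - kap 1)^2 = X i" "(kap (j+1) - kap 1)^2 = X j" by (simp_all add: X_def qq_def)
    ultimately show "((kap (i+1) - kap (j+1))^2 / ((kap (i+1) - kap 1)^2 * (kap (j+1) - kap 1)^2)) powi (c i * c j)
       = qq kap (i+1) (j+1) powi (c i * c j) * (X i powi (- (c i * c j)) * X j powi (- (c i * c j)))"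
      by (simp add: power_int_divide_distrib power_int_mult_distrib power_int_minus divide_inverse inverse_mult_distrib power_int_inverse)
  qed
  have f3: "(\<Prod>(i,j)\<in>P' g. X i powi (- (c i * c j))) = (\<Prod>i=1..g. X i powi (\<Sum>j\<in>{i<..g}. - (c i * c j)))"
    unfolding prodP'1 by (rule prod.cong[OF refl]) (simp add: powi_sum Xnz)
  have f4: "(\<Prod>(i,j)\<in>P' g. X j powi (- (c i * c j))) = (\<Prod>j=1..g. X j powi (\<Sum>i\<in>{1..<j}. - (c i * c j)))"
    unfolding prodP'2 by (rule prod.cong[OF refl]) (simp add: powi_sum Xnz)
  have ex: "- ((c i)^2) + (\<Sum>j\<in>{i<..g}. - (c i * c j)) + (\<Sum>j\<in>{1..<i}. - (c j * c i)) = \<sigma> * (- c i)"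
    if i: "i \<in> {1..g}" for i
  proof -
    have e: "{1..g} = {1..<i} \<union> ({i} \<union> {i<..g})" using i by auto
    have "\<sigma> = sum c {1..<i} + sum c ({i} \<union> {i<..g})"
      unfolding \<sigma>_def e by (rule sum.union_disjoint) auto
    also have "sum c ({i} \<union> {i<..g}) = c i + sum c {i<..g}" by (subst sum.union_disjoint) auto
    finally have "\<sigma> = (\<Sum>j\<in>{1..<i}. c j) + (c i + (\<Sum>j\<in>{i<..g}. c j))" .
    thus ?thesis by (simp add: sum_negf sum_distrib_left sum_distrib_right power2_eq_square algebra_simps)
  qed
  have "a_coef g c kap = (\<Prod>i=1..g. X i powi (- ((c i)^2))) *
      ((\<Prod>(i,j)\<in>P' g. qq kap (i+1) (j+1) powi (c i * c j)) *
       ((\<Prod>i=1..g. X i powi (\<Sum>j\<in>{i<..g}. - (c i * c j))) * (\<Prod>j=1..g. X j powi (\<Sum>i\<in>{1..<j}. - (c i * c j)))))"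
    unfolding a_coef_def f1 f2 f3[symmetric] f4[symmetric] by (simp add: prod.distrib case_prod_unfold)
  also have "\<dots> = (\<Prod>i=1..g. X i powi (- ((c i)^2)) * (X i powi (\<Sum>j\<in>{i<..g}. - (c i * c j)) * X i powi (\<Sum>j\<in>{1..<i}. - (c j * c i)))) *
      (\<Prod>(i,j)\<in>P' g. qq kap (i+1) (j+1) powi (c i * c j))"
    by (simp add: prod.distrib mult_ac)
  also have "(\<Prod>i=1..g. X i powi (- ((c i)^2)) * (X i powi (\<Sum>j\<in>{i<..g}. - (c i * c j)) * X i powi (\<Sum>j\<in>{1..<i}. - (c j * c i))))
     = (\<Prod>i=1..g. X i powi (\<sigma> * (- c i)))"
  proof (rule prod.cong[OF refl])
    fix i assume i: "i \<in> {1..g}"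
    show "X i powi (- ((c i)^2)) * (X i powi (\<Sum>j\<in>{i<..g}. - (c i * c j)) * X i powi (\<Sum>j\<in>{1..<i}. - (c j * c i))) = X i powi (\<sigma> * (- c i))"
      unfolding ex[OF i, symmetric] by (simp only: power_int_add[OF disjI1[OF Xnz[OF i]]] mult.assoc)
  qed
  finally show ?thesis by (simp add: QF_BTc X_def \<sigma>_def)
qed


lemma prodlam:
  assumes S: "S \<subseteq> {1..g+1}"
  shows "(\<Prod>l=1..g. lam l powi indic S (l+1)) = (\<Prod>j\<in>S. dd lam j)"
proof -
  have "(\<Prod>j\<in>S. dd lam j) = (\<Prod>j\<in>{1..g+1} \<inter> S. dd lam j)" using S by (simp add: Int_absorb1)
  also have "\<dots> = (\<Prod>j\<in>{1..g+1}. if j \<in> S then dd lam j else 1)"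
    by (rule prod.inter_restrict) simp
  also have "\<dots> = (if 1 \<in> S then dd lam 1 else 1) * (\<Prod>j\<in>{Suc 1..Suc g}. if j \<in> S then dd lam j else 1)"
    by (subst prod.atLeast_Suc_atMost) auto
  also have "(\<Prod>j\<in>{Suc 1..Suc g}. if j \<in> S then dd lam j else 1) = (\<Prod>l\<in>{1..g}. if Suc l \<in> S then dd lam (Suc l) else 1)"
    by (rule prod.shift_bounds_cl_Suc_ivl)
  also have "\<dots> = (\<Prod>l=1..g. lam l powi indic S (l+1))"
    by (rule prod.cong[OF refl]) (auto simp: dd_def indic_def)
  finally show ?thesis by (simp add: dd_def)
qed

lemma dd_prod_nz:
  assumes S: "S \<subseteq> {1..g+1}" and lam: "\<forall>l\<in>{1..g}. lam l \<noteq> 0"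
  shows "(\<Prod>j\<in>S. dd lam j) \<noteq> 0"
proof -
  have fin: "finite S" using S finite_subset by blast
  have "dd lam j \<noteq> 0" if "j \<in> S" for j
  proof (cases "j = 1")
    case False
    moreover have "j \<in> {1..g+1}" using that S by blast
    ultimately have "j - 1 \<in> {1..g}" by auto
    thus ?thesis using False lam by (simp add: dd_def)
  qed (simp add: dd_def)
  thus ?thesis using fin by (simp add: prod_zero_iff)
qed

lemma part1:
  assumes ok: "params_ok g lam kap" and J: "J \<in> ksubsets (g+1) k" and k: "1 \<le> k" "k \<le> g"
  shows "alpha_tilde k lam kap J = alpha_tilde_expl g k lam kap J"
proof -
  have JS: "J \<subseteq> {1..g+1}" and cJ: "card J = k" using J by (auto simp: ksubsets_def)
  have finJ: "finite J" using JS finite_subset by blast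
  have IS: "{1..k} \<subseteq> {1..g+1}" using k by auto
  have lam: "\<forall>l\<in>{1..g}. lam l \<noteq> 0" and inj: "inj_on kap {1..g+1}" using ok by (auto simp: params_ok_def)
  define PJ where "PJ = (\<Prod>j\<in>J. dd lam j)"
  define PI where "PI = (\<Prod>j\<in>{1..k}. dd lam j)"
  have mJ: "minor k (Atilde lam kap) J = KJ kap J * PJ"
    unfolding PJ_def by (rule minor_Atilde[OF finJ cJ])
  have mI: "minor k (Atilde lam kap) {1..k} = KJ kap {1..k} * PI"
    unfolding PI_def by (rule minor_Atilde) auto
  have PInz: "PI \<noteq> 0" unfolding PI_def by (rule dd_prod_nz[OF IS lam])
  have KInz: "KJ kap {1..k} \<noteq> 0" by (rule KJ_nz[OF IS inj])
  have "(\<Prod>l=1..g. lam l powi (BTc g (cvec g k J) (l+1))) =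
        (\<Prod>l=1..g. lam l powi indic J (l+1) / lam l powi indic {1..k} (l+1))"
  proof (rule prod.cong[OF refl])
    fix l assume l: "l \<in> {1..g}"
    have "BTc g (cvec g k J) (l+1) = indic J (l+1) - indic {1..k} (l+1)"
      using l by (simp add: BTc_Suc BTc_Suc' cvec_eq[OF J k] c0_def svec_indic)
    thus "lam l powi (BTc g (cvec g k J) (l+1)) = lam l powi indic J (l+1) / lam l powi indic {1..k} (l+1)"
      using lam l by (simp add: power_int_diff)
  qed
  also have "\<dots> = PJ / PI"
    by (simp only: prod_dividef prodlam[OF JS] prodlam[OF IS] PJ_def PI_def)
  finally have e: "(\<Prod>l=1..g. lam l powi (BTc g (cvec g k J) (l+1))) = PJ / PI" .
  show ?thesis
    unfolding alpha_tilde_def alpha_tilde_expl_def e mJ mI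
    using PInz KInz by (simp add: field_simps power2_eq_square)
qed

definition fF :: "nat \<Rightarrow> nat \<Rightarrow> (nat \<Rightarrow> complex) \<Rightarrow> nat \<Rightarrow> complex" where
  "fF g k kap l = LF g kap (svec k) (\<lambda>m. Bmat l m)"

lemma key:
  assumes ok: "params_ok g lam kap" and J: "J \<in> ksubsets (g+1) k" and k: "1 \<le> k" "k \<le> g"
  shows "alpha_tilde_expl g k lam kap J = alpha_psi g k (\<lambda>l. fF g k kap l / lam l) kap J"
proof -
  have JS: "J \<subseteq> {1..g+1}" using J by (auto simp: ksubsets_def)
  have IS: "{1..k} \<subseteq> {1..g+1}" using k by auto
  have lam: "\<forall>l\<in>{1..g}. lam l \<noteq> 0" and inj: "inj_on kap {1..g+1}" using ok by (auto simp: params_ok_def)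
  define c where "c = cvec g k J"
  define v where "v = BTc g c"
  have sv: "svec k = indic {1..k}" by (simp add: fun_eq_iff svec_indic)
  have QFs: "QF g kap (svec k) = KJ kap {1..k} ^ 2" unfolding sv by (rule KJ_sq[OF IS, symmetric])
  have QFsnz: "QF g kap (svec k) \<noteq> 0" using KJ_nz[OF IS inj] QFs by simp
  have "KJ kap J ^ 2 = QF g kap (indic J)" by (rule KJ_sq[OF JS])
  also have "\<dots> = QF g kap (\<lambda>m. svec k m + v m)"
    using cvec_prop[OF J k] by (intro QF_cong) (simp add: v_def c_def add.commute)
  also have "\<dots> = QF g kap (svec k) * QF g kap v * LF g kap (svec k) v"
    by (rule QF_add[OF inj])
  also have "QF g kap v = a_coef g c kap" unfolding v_def by (rule a_coef_QF[OF inj, symmetric])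
  also have "LF g kap (svec k) v = (\<Prod>l=1..g. fF g k kap l powi c l)"
    unfolding v_def fF_def by (rule LF_BTc[OF inj])
  finally have KJJ: "KJ kap J ^ 2 = QF g kap (svec k) * a_coef g c kap * (\<Prod>l=1..g. fF g k kap l powi c l)" .
  have e1: "(\<Prod>l=1..g. lam l powi (BTc g c (l+1))) = (\<Prod>l=1..g. lam l powi (- c l))"
    by (rule prod.cong[OF refl]) (simp add: BTc_Suc BTc_Suc')
  have e2: "(\<Prod>l=1..g. (fF g k kap l / lam l) powi c l) = (\<Prod>l=1..g. fF g k kap l powi c l) * (\<Prod>l=1..g. lam l powi (- c l))"
    by (simp add: prod.distrib[symmetric] power_int_divide_distrib power_int_minus divide_inverse power_int_mult_distrib power_int_inverse)
  show ?thesis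
    unfolding alpha_tilde_expl_def alpha_psi_def c_def[symmetric] e1 e2 KJJ QFs[symmetric]
    using QFsnz by (simp add: field_simps)
qed

lemma cone_pt_cong:
  assumes "\<forall>J\<in>ksubsets (g+1) k. a1 J = a2 J"
  shows "cone_pt g k a1 kap t = cone_pt g k a2 kap t"
  using assms by (auto simp: cone_pt_def fun_eq_iff split: coord.splits)

lemma alpha_psi_cong:
  assumes "\<forall>l\<in>{1..g}. b1 l = b2 l"
  shows "alpha_psi g k b1 kap J = alpha_psi g k b2 kap J"
  unfolding alpha_psi_def using assms by (intro arg_cong2[where f = "(*)"] refl prod.cong) auto

lemma fF_nz: "inj_on kap {1..g+1} \<Longrightarrow> fF g k kap l \<noteq> 0"
  unfolding fF_def by (rule LF_nz)

lemma cones_eq: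
  assumes k: "1 \<le> k" "k \<le> g"
  shows "psi_tilde_cone g k = psi_cone g k"
proof
  show "psi_tilde_cone g k \<subseteq> psi_cone g k"
  proof
    fix x assume "x \<in> psi_tilde_cone g k"
    then obtain lam kap t where x: "x = cone_pt g k (alpha_tilde k lam kap) kap t"
      and ok: "params_ok g lam kap" and t: "t \<noteq> 0" by (auto simp: psi_tilde_cone_def)
    define beta where "beta = (\<lambda>l. fF g k kap l / lam l)"
    have ok2: "params_ok g beta kap"
      using ok fF_nz[of kap g k] by (auto simp: params_ok_def beta_def)
    have "x = cone_pt g k (alpha_psi g k beta kap) kap t"
      unfolding x beta_def
      by (rule cone_pt_cong) (use part1[OF ok _ k] key[OF ok _ k] in auto)
    thus "x \<in> psi_cone g k" using ok2 t unfolding psi_cone_def by blast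
  qed
next
  show "psi_cone g k \<subseteq> psi_tilde_cone g k"
  proof
    fix x assume "x \<in> psi_cone g k"
    then obtain beta kap t where x: "x = cone_pt g k (alpha_psi g k beta kap) kap t"
      and ok: "params_ok g beta kap" and t: "t \<noteq> 0" by (auto simp: psi_cone_def)
    have inj: "inj_on kap {1..g+1}" using ok by (simp add: params_ok_def)
    define lam where "lam = (\<lambda>l. fF g k kap l / beta l)"
    have ok2: "params_ok g lam kap"
      using ok fF_nz[of kap g k] by (auto simp: params_ok_def lam_def)
    have bb: "\<forall>l\<in>{1..g}. fF g k kap l / lam l = beta l"
      using ok fF_nz[OF inj, of k] by (auto simp: params_ok_def lam_def)
    have "x = cone_pt g k (alpha_tilde k lam kap) kap t"
      unfolding x
    proof (rule cone_pt_cong, intro ballI)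
      fix J assume J: "J \<in> ksubsets (g+1) k"
      have "alpha_tilde k lam kap J = alpha_psi g k (\<lambda>l. fF g k kap l / lam l) kap J"
        using part1[OF ok2 J k] key[OF ok2 J k] by simp
      also have "\<dots> = alpha_psi g k beta kap J" by (rule alpha_psi_cong[OF bb])
      finally show "alpha_psi g k beta kap J = alpha_tilde k lam kap J" by simp
    qed
    thus "x \<in> psi_tilde_cone g k" using ok2 t unfolding psi_tilde_cone_def by blast
  qed
qed

theorem theorem5p10:
  fixes g k :: nat
  assumes "1 \<le> g" and "1 \<le> k" and "k \<le> g"
  shows "(\<forall>lam kap J. params_ok g lam kap \<and> J \<in> ksubsets (g+1) k \<longrightarrow>
            alpha_tilde k lam kap J = alpha_tilde_expl g k lam kap J)
       \<and> zariski_closure (coords g k) (psi_tilde_cone g k) \<inter> target g k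
         = zariski_closure (coords g k) (psi_cone g k) \<inter> target g k"
  using part1[OF _ _ assms(2,3)] cones_eq[OF assms(2,3)] by auto

end
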